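(* Let $\mathbf{a}=(a_1,\dots,a_n)$ be positive integers with sum $a$, $m\ge1$, and $\mathbf{r}=(r_1,\dots,r_m)$, $\mathbf{s}=(s_1,\dots,s_m)$ sequences of nonnegative integers with sums $r$, $s$. Let $N = n +a(r+s)+m\sum_{1\le i<j\le n} a_i a_j+ \sum_{i=1}^m r_i s_i$ and $N^- = n +a(r+s)+m\sum_{1\le i<j\le n} a_i a_j$. Then \[ |\mathrm{SB}(\mathbf{a},\mathbf{r},\mathbf{s})| = |\mathrm{SB}^-(\mathbf{a},\mathbf{r},\mathbf{s})| \frac{N!}{(N^-)!}. \]
   Context: Let $A_i=a_1+\dots+a_i$, $A_0=0$. For nonnegative integers $p,q$, the $(\mathbf{a},p,q)$-staircase: rows $1,\dots,p$ contain columns $1,\dots,a+q$; for $1\le i\le n$ and $A_{i-1}<t\le A_i$, row $p+t$ contains columns $A_{i-1}+1,\dots,a+q$; then, for each $i$, the $a_i\times a_i$ square of rows $p+A_{i-1}+1,\dots,p+A_i$ and columns $A_{i-1}+1,\dots,A_i$ is merged into a single cell, the $i$th diagonal cell, regarded as lying in each of these rows and columns. The $(\mathbf{a},p,q)^-$-staircase is obtained by further removing the cells in rows $1,\dots,p$ and columns $a+1,\dots,a+q$. Taking pages = the $(\mathbf{a},r_i,s_i)$-staircases (resp. $(\mathbf{a},r_i,s_i)^-$-staircases), $1\le i\le m$, with the $j$th diagonal cells of all pages identified, an $(\mathbf{a},\mathbf{r},\mathbf{s})$-Selberg book (resp. $(\mathbf{a},\mathbf{r},\mathbf{s})^-$-Selberg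 book) is a filling of the resulting cells with $1,\dots,N$ (resp. $1,\dots,N^-$), each used once, such that every non-diagonal cell has entry larger than that of the diagonal cell in its row (if any) and smaller than that of the diagonal cell in its column (if any). $\mathrm{SB}(\mathbf{a},\mathbf{r},\mathbf{s})$, $\mathrm{SB}^-(\mathbf{a},\mathbf{r},\mathbf{s})$ denote these sets. *)

theory Defs
  imports Complex_Main
begin

text \<open>Conventions: a, r, s are lists; a = [a_1,...,a_n], r = [r_1,...,r_m], s = [s_1,...,s_m].
  Diagonal cells and pages are indexed from 0; rows and columns are numbered from 1.\<close>

definition Apart :: "nat list \<Rightarrow> nat \<Rightarrow> nat" where
  "Apart a i = sum_list (take i a)"

datatype cell = Diag nat | Off nat nat nat  (* Off k row col : non-diagonal cell on page k *)

text \<open>Raw cells of the (a,p,q)-staircase before merging diagonal squares.\<close>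
definition raw_cell :: "nat list \<Rightarrow> nat \<Rightarrow> nat \<Rightarrow> nat \<Rightarrow> nat \<Rightarrow> bool" where
  "raw_cell a p q row col \<longleftrightarrow>
     (1 \<le> row \<and> row \<le> p \<and> 1 \<le> col \<and> col \<le> sum_list a + q) \<or>
     (\<exists>i<length a. \<exists>t. Apart a i < t \<and> t \<le> Apart a (Suc i) \<and> row = p + t \<and>
        Apart a i + 1 \<le> col \<and> col \<le> sum_list a + q)"

definition in_diag_square :: "nat list \<Rightarrow> nat \<Rightarrow> nat \<Rightarrow> nat \<Rightarrow> nat \<Rightarrow> bool" where
  "in_diag_square a p i row col \<longleftrightarrow> i < length a \<and>
     p + Apart a i < row \<and> row \<le> p + Apart a (Suc i) \<and>
     Apart a i < col \<and> col \<le> Apart a (Suc i)"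

text \<open>Non-diagonal cells of the (a,p,q)-staircase (mn = False) or
  (a,p,q)^- staircase (mn = True).\<close>
definition off_cell :: "bool \<Rightarrow> nat list \<Rightarrow> nat \<Rightarrow> nat \<Rightarrow> nat \<Rightarrow> nat \<Rightarrow> bool" where
  "off_cell mn a p q row col \<longleftrightarrow>
     raw_cell a p q row col \<and> \<not> (\<exists>i. in_diag_square a p i row col) \<and>
     \<not> (mn \<and> 1 \<le> row \<and> row \<le> p \<and> sum_list a + 1 \<le> col \<and> col \<le> sum_list a + q)"

definition book_cells :: "bool \<Rightarrow> nat list \<Rightarrow> nat list \<Rightarrow> nat list \<Rightarrow> cell set" where
  "book_cells mn a r s =
     {Diag i | i. i < length a} \<union>
     {Off k row col | k row col. k < length r \<and> off_cell mn a (r ! k) (s ! k) row col}"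

definition diag_in_row :: "nat list \<Rightarrow> nat \<Rightarrow> nat \<Rightarrow> nat \<Rightarrow> bool" where
  "diag_in_row a p i row \<longleftrightarrow> i < length a \<and> p + Apart a i < row \<and> row \<le> p + Apart a (Suc i)"

definition diag_in_col :: "nat list \<Rightarrow> nat \<Rightarrow> nat \<Rightarrow> bool" where
  "diag_in_col a i col \<longleftrightarrow> i < length a \<and> Apart a i < col \<and> col \<le> Apart a (Suc i)"

definition selberg_N :: "nat list \<Rightarrow> nat list \<Rightarrow> nat list \<Rightarrow> nat" where
  "selberg_N a r s = length a + sum_list a * (sum_list r + sum_list s)
     + length r * (\<Sum>i<length a. \<Sum>j\<in>{i<..<length a}. a ! i * a ! j)
     + (\<Sum>k<length r. r ! k * s ! k)"

definition selberg_Nm :: "nat list \<Rightarrow> nat list \<Rightarrow> nat list \<Rightarrow> nat" where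
  "selberg_Nm a r s = length a + sum_list a * (sum_list r + sum_list s)
     + length r * (\<Sum>i<length a. \<Sum>j\<in>{i<..<length a}. a ! i * a ! j)"

definition SB_gen :: "bool \<Rightarrow> nat \<Rightarrow> nat list \<Rightarrow> nat list \<Rightarrow> nat list \<Rightarrow> (cell \<Rightarrow> nat) set" where
  "SB_gen mn NN a r s =
     {f. bij_betw f (book_cells mn a r s) {1..NN} \<and>
         (\<forall>x. x \<notin> book_cells mn a r s \<longrightarrow> f x = 0) \<and>
         (\<forall>k row col. Off k row col \<in> book_cells mn a r s \<longrightarrow>
            (\<forall>i. diag_in_row a (r ! k) i row \<longrightarrow> f (Diag i) < f (Off k row col)) \<and>
            (\<forall>i. diag_in_col a i col \<longrightarrow> f (Off k row col) < f (Diag i)))}"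

definition SB :: "nat list \<Rightarrow> nat list \<Rightarrow> nat list \<Rightarrow> (cell \<Rightarrow> nat) set" where
  "SB a r s = SB_gen False (selberg_N a r s) a r s"

definition SBm :: "nat list \<Rightarrow> nat list \<Rightarrow> nat list \<Rightarrow> (cell \<Rightarrow> nat) set" where
  "SBm a r s = SB_gen True (selberg_Nm a r s) a r s"

end

theory Submission
  imports Defs
begin

definition Sset :: "'c set \<Rightarrow> nat \<Rightarrow> ('c \<times> 'c) set \<Rightarrow> ('c \<Rightarrow> nat) set" where
  "Sset X n R = {f. bij_betw f X {1..n} \<and> (\<forall>y. y \<notin> X \<longrightarrow> f y = 0) \<and> (\<forall>(c,d)\<in>R. f c < f d)}"

definition insv :: "'c \<Rightarrow> nat \<Rightarrow> ('c \<Rightarrow> nat) \<Rightarrow> 'c \<Rightarrow> nat" where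
  "insv x v g = (\<lambda>y. if y = x then v else if g y = 0 then 0 else if g y < v then g y else Suc (g y))"

definition delv :: "'c \<Rightarrow> nat \<Rightarrow> ('c \<Rightarrow> nat) \<Rightarrow> 'c \<Rightarrow> nat" where
  "delv x v f = (\<lambda>y. if y = x then 0 else if f y < v then f y else f y - 1)"

lemma bij_from_card:
  assumes "finite X" "card X = n" "inj_on g X" "g ` X \<subseteq> {1..n}"
  shows "bij_betw g X {1..n}"
proof -
  have "card (g ` X) = card {1..n}" using assms card_image by fastforce
  then have "g ` X = {1..n}" using assms card_subset_eq by (metis finite_atLeastAtMost)
  then show ?thesis using assms unfolding bij_betw_def by simp
qed

lemma ins_mem:
  assumes "finite X" "x \<notin> X" "R \<subseteq> X \<times> X" "v \<in> {1..Suc n}" "g \<in> Sset X n R"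
  shows "insv x v g \<in> Sset (insert x X) (Suc n) R"
proof -
  have bg: "bij_betw g X {1..n}" and out: "\<And>y. y \<notin> X \<Longrightarrow> g y = 0"
    and rel: "\<And>c d. (c,d) \<in> R \<Longrightarrow> g c < g d"
    using assms(5) unfolding Sset_def by auto
  have inj: "inj_on g X" and img: "g ` X = {1..n}" using bg unfolding bij_betw_def by auto
  have cX: "card X = n" using bg bij_betw_same_card by fastforce
  have gv: "\<And>y. y \<in> X \<Longrightarrow> g y \<in> {1..n}" using img by auto
  let ?h = "insv x v g"
  have hX: "\<And>y. y \<in> X \<Longrightarrow> ?h y = (if g y < v then g y else Suc (g y))"
    using gv assms(2) unfolding insv_def by force
  have "inj_on ?h (insert x X)"
  proof (rule inj_onI)
    fix y z assume y: "y \<in> insert x X" and z: "z \<in> insert x X" and e: "?h y = ?h z"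
    show "y = z"
    proof (cases "y = x")
      case True
      then show ?thesis using z e hX[of z] by (cases "z = x") (auto simp: insv_def split: if_splits)
    next
      case False
      then have yX: "y \<in> X" using y by auto
      show ?thesis
      proof (cases "z = x")
        case True
        then show ?thesis using yX e hX[of y] by (auto simp: insv_def split: if_splits)
      next
        case False
        then have zX: "z \<in> X" using z by auto
        have "g y = g z" using e hX[OF yX] hX[OF zX] by (auto split: if_splits)
        then show ?thesis using inj yX zX inj_on_def by metis
      qed
    qed
  qed
  moreover have "?h ` (insert x X) \<subseteq> {1..Suc n}"
  proof
    fix t assume "t \<in> ?h ` (insert x X)"
    then obtain y where y: "y \<in> insert x X" "t = ?h y" by auto
    show "t \<in> {1..Suc n}"
    proof (cases "y = x")
      case True then show ?thesis using y assms(4) by (simp add: insv_def)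
    next
      case False then have "y \<in> X" using y by auto
      then show ?thesis using y hX gv[of y] by auto
    qed
  qed
  moreover have "card (insert x X) = Suc n" using cX assms(1,2) by simp
  ultimately have "bij_betw ?h (insert x X) {1..Suc n}"
    using bij_from_card assms(1) by blast
  moreover have "\<forall>y. y \<notin> insert x X \<longrightarrow> ?h y = 0" using out by (simp add: insv_def)
  moreover have "\<forall>(c,d)\<in>R. ?h c < ?h d"
  proof (clarify)
    fix c d assume cd: "(c,d) \<in> R"
    then have "c \<in> X" "d \<in> X" using assms(3) by auto
    then show "?h c < ?h d" using hX rel[OF cd] by auto
  qed
  ultimately show ?thesis unfolding Sset_def by blast
qed

lemma del_mem:
  assumes "finite X" "x \<notin> X" "R \<subseteq> X \<times> X" "f \<in> Sset (insert x X) (Suc n) R"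
  shows "delv x (f x) f \<in> Sset X n R" and "f x \<in> {1..Suc n}"
proof -
  have bf: "bij_betw f (insert x X) {1..Suc n}" and out: "\<And>y. y \<notin> insert x X \<Longrightarrow> f y = 0"
    and rel: "\<And>c d. (c,d) \<in> R \<Longrightarrow> f c < f d"
    using assms(4) unfolding Sset_def by auto
  have inj: "inj_on f (insert x X)" and img: "f ` (insert x X) = {1..Suc n}" using bf unfolding bij_betw_def by auto
  have "card (insert x X) = Suc n" using bf bij_betw_same_card by fastforce
  then have cX: "card X = n" using assms(1,2) by simp
  have fv: "\<And>y. y \<in> insert x X \<Longrightarrow> f y \<in> {1..Suc n}" using img by auto
  have ne: "\<And>y. y \<in> X \<Longrightarrow> f y \<noteq> f x" using inj assms(2) inj_on_def by (metis insertCI)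
  show vx: "f x \<in> {1..Suc n}" using fv by auto
  let ?v = "f x"
  let ?g = "delv x ?v f"
  have gX: "\<And>y. y \<in> X \<Longrightarrow> ?g y = (if f y < ?v then f y else f y - 1)"
    using assms(2) unfolding delv_def by force
  have "inj_on ?g X"
  proof (rule inj_onI)
    fix y z assume yX: "y \<in> X" and zX: "z \<in> X" and e: "?g y = ?g z"
    have "f y = f z" using e gX[OF yX] gX[OF zX] ne[OF yX] ne[OF zX] fv[of y] fv[of z] yX zX
      by (auto split: if_splits)
    then show "y = z" using inj yX zX inj_on_def by (metis insertCI)
  qed
  moreover have "?g ` X \<subseteq> {1..n}"
  proof
    fix t assume "t \<in> ?g ` X"
    then obtain y where y: "y \<in> X" "t = ?g y" by auto
    show "t \<in> {1..n}" using y gX[OF y(1)] ne[OF y(1)] fv[of y] vx by auto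
  qed
  ultimately have "bij_betw ?g X {1..n}" using bij_from_card assms(1) cX by blast
  moreover have "\<forall>y. y \<notin> X \<longrightarrow> ?g y = 0" using out vx by (auto simp: delv_def)
  moreover have "\<forall>(c,d)\<in>R. ?g c < ?g d"
  proof (clarify)
    fix c d assume cd: "(c,d) \<in> R"
    then have c: "c \<in> X" and d: "d \<in> X" using assms(3) by auto
    show "?g c < ?g d" using gX[OF c] gX[OF d] rel[OF cd] ne[OF c] ne[OF d] fv[of c] fv[of d] c d
      by auto
  qed
  ultimately show "?g \<in> Sset X n R" unfolding Sset_def by blast
qed

lemma step:
  assumes "finite X" "x \<notin> X" "R \<subseteq> X \<times> X"
  shows "card (Sset (insert x X) (Suc n) R) = Suc n * card (Sset X n R)"
proof -
  have "bij_betw (\<lambda>(v,g). insv x v g) ({1..Suc n} \<times> Sset X n R) (Sset (insert x X) (Suc n) R)"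
  proof (rule bij_betw_byWitness[where f' = "\<lambda>h. (h x, delv x (h x) h)"])
    show "\<forall>p\<in>{1..Suc n} \<times> Sset X n R. (\<lambda>h. (h x, delv x (h x) h)) ((\<lambda>(v,g). insv x v g) p) = p"
    proof
      fix p assume p: "p \<in> {1..Suc n} \<times> Sset X n R"
      obtain v g where pv: "p = (v,g)" by (cases p)
      have v: "v \<ge> 1" using p pv by auto
      have g0: "g x = 0" using p pv assms(2) unfolding Sset_def by auto
      have "delv x v (insv x v g) = g"
        using v g0 by (auto simp: delv_def insv_def fun_eq_iff)
      then show "(\<lambda>h. (h x, delv x (h x) h)) ((\<lambda>(v,g). insv x v g) p) = p"
        using pv by (simp add: insv_def)
    qed
    show "\<forall>h\<in>Sset (insert x X) (Suc n) R. (\<lambda>(v,g). insv x v g) ((\<lambda>h. (h x, delv x (h x) h)) h) = h"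
    proof
      fix h assume h: "h \<in> Sset (insert x X) (Suc n) R"
      have bf: "bij_betw h (insert x X) {1..Suc n}" and out: "\<And>y. y \<notin> insert x X \<Longrightarrow> h y = 0"
        using h unfolding Sset_def by auto
      have inj: "inj_on h (insert x X)" using bf unfolding bij_betw_def by auto
      have ne: "\<And>y. y \<in> X \<Longrightarrow> h y \<noteq> h x" using inj assms(2) inj_on_def by (metis insertCI)
      have vx: "h x \<ge> 1" using del_mem(2)[OF assms h] by auto
      have "insv x (h x) (delv x (h x) h) = h"
      proof
        fix y
        show "insv x (h x) (delv x (h x) h) y = h y"
        proof (cases "y \<in> X")
          case True then show ?thesis using ne[OF True] vx assms(2) by (auto simp: insv_def delv_def)
        next
          case False then show ?thesis using out[of y] vx by (auto simp: insv_def delv_def)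
        qed
      qed
      then show "(\<lambda>(v,g). insv x v g) ((\<lambda>h. (h x, delv x (h x) h)) h) = h" by simp
    qed
    show "(\<lambda>(v,g). insv x v g) ` ({1..Suc n} \<times> Sset X n R) \<subseteq> Sset (insert x X) (Suc n) R"
      using ins_mem[OF assms] by auto
    show "(\<lambda>h. (h x, delv x (h x) h)) ` Sset (insert x X) (Suc n) R \<subseteq> {1..Suc n} \<times> Sset X n R"
      using del_mem[OF assms] by auto
  qed
  then have "card (Sset (insert x X) (Suc n) R) = card ({1..Suc n} \<times> Sset X n R)"
    using bij_betw_same_card by metis
  then show ?thesis by (simp add: card_cartesian_product)
qed

lemma Sset_infinite: "\<not> finite X \<Longrightarrow> Sset X n R = {}"
  unfolding Sset_def using bij_betw_finite by fastforce

lemma iter: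
  assumes "finite F" "F \<inter> X = {}" "R \<subseteq> X \<times> X"
  shows "card (Sset (X \<union> F) (n + card F) R) * fact n = card (Sset X n R) * fact (n + card F)"
  using assms
proof (induction F rule: finite_induct)
  case empty
  then show ?case by simp
next
  case (insert y F)
  show ?case
  proof (cases "finite X")
    case False
    then show ?thesis using Sset_infinite by (simp add: Sset_infinite)
  next
    case True
    have IH: "card (Sset (X \<union> F) (n + card F) R) * fact n = card (Sset X n R) * fact (n + card F)"
      using insert by auto
    have yn: "y \<notin> X \<union> F" using insert by auto
    have e: "X \<union> insert y F = insert y (X \<union> F)" by auto
    have "card (Sset (X \<union> insert y F) (n + card (insert y F)) R) =
          Suc (n + card F) * card (Sset (X \<union> F) (n + card F) R)"
      using step[OF _ yn, of R "n + card F"] True insert e by auto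
    then have "card (Sset (X \<union> insert y F) (n + card (insert y F)) R) * fact n =
          Suc (n + card F) * (card (Sset X n R) * fact (n + card F))"
      using IH by (metis mult.assoc)
    also have "\<dots> = card (Sset X n R) * fact (n + card (insert y F))"
      using insert by (simp add: fact_Suc algebra_simps)
    finally show ?thesis .
  qed
qed


definition Rel :: "bool \<Rightarrow> nat list \<Rightarrow> nat list \<Rightarrow> nat list \<Rightarrow> (cell \<times> cell) set" where
  "Rel mn a r s =
     {(Diag i, Off k row col) | i k row col. Off k row col \<in> book_cells mn a r s \<and> diag_in_row a (r ! k) i row}
   \<union> {(Off k row col, Diag i) | i k row col. Off k row col \<in> book_cells mn a r s \<and> diag_in_col a i col}"

lemma SB_gen_eq: "SB_gen mn NN a r s = Sset (book_cells mn a r s) NN (Rel mn a r s)"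
  unfolding SB_gen_def Sset_def Rel_def by blast

lemma Apart_le: "Apart a j \<le> sum_list a"
proof -
  have "sum_list a = sum_list (take j a) + sum_list (drop j a)"
    by (metis append_take_drop_id sum_list_append)
  then show ?thesis unfolding Apart_def by linarith
qed

lemma off_True_False: "off_cell True a p q row col \<Longrightarrow> off_cell False a p q row col"
  unfolding off_cell_def by auto

lemma book_sub: "book_cells True a r s \<subseteq> book_cells False a r s"
  unfolding book_cells_def using off_True_False by blast

lemma row_True:
  assumes "Off k row col \<in> book_cells False a r s" "diag_in_row a (r ! k) i row"
  shows "Off k row col \<in> book_cells True a r s"
  using assms unfolding book_cells_def off_cell_def diag_in_row_def by auto

lemma col_True:
  assumes "Off k row col \<in> book_cells False a r s" "diag_in_col a i col"
  shows "Off k row col \<in> book_cells True a r s"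
proof -
  have "col \<le> sum_list a" using assms(2) Apart_le[of a "Suc i"] unfolding diag_in_col_def by auto
  then show ?thesis using assms(1) unfolding book_cells_def off_cell_def by auto
qed

lemma Rel_eq: "Rel False a r s = Rel True a r s"
  unfolding Rel_def
  apply (rule equalityI)
   apply (auto dest: row_True col_True)[1]
  using book_sub by blast

lemma Rel_sub: "Rel True a r s \<subseteq> book_cells True a r s \<times> book_cells True a r s"
  unfolding Rel_def by (auto simp: book_cells_def diag_in_row_def diag_in_col_def)

definition Fr :: "nat list \<Rightarrow> nat list \<Rightarrow> nat list \<Rightarrow> cell set" where
  "Fr a r s = (\<lambda>(k,row,col). Off k row col) `
     (SIGMA k:{..<length r}. {1..r!k} \<times> {sum_list a+1..sum_list a + s!k})"

lemma Fr_mem: "x \<in> Fr a r s \<longleftrightarrow> (\<exists>k row col. x = Off k row col \<and> k < length r \<and> 1 \<le> row \<and> row \<le> r!k \<and>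
    sum_list a + 1 \<le> col \<and> col \<le> sum_list a + s!k)"
  unfolding Fr_def by force

lemma book_decomp: "book_cells False a r s = book_cells True a r s \<union> Fr a r s"
proof -
  have "\<And>k row col. k < length r \<Longrightarrow> 1 \<le> row \<Longrightarrow> row \<le> r!k \<Longrightarrow> sum_list a + 1 \<le> col
      \<Longrightarrow> col \<le> sum_list a + s!k \<Longrightarrow> off_cell False a (r!k) (s!k) row col"
    unfolding off_cell_def raw_cell_def in_diag_square_def by auto
  then show ?thesis unfolding book_cells_def off_cell_def by (auto simp: Fr_mem)
qed

lemma Fr_disj: "Fr a r s \<inter> book_cells True a r s = {}"
  unfolding book_cells_def Fr_def off_cell_def by auto

lemma Fr_card: "card (Fr a r s) = (\<Sum>k<length r. r ! k * s ! k)"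
proof -
  have inj: "inj_on (\<lambda>(k,row,col). Off k row col)
     (SIGMA k:{..<length r}. {1..r!k} \<times> {sum_list a+1..sum_list a + s!k})"
    by (auto simp: inj_on_def)
  have "card (Fr a r s) = card (SIGMA k:{..<length r}. {1..r!k} \<times> {sum_list a+1..sum_list a + s!k})"
    unfolding Fr_def using card_image[OF inj] by simp
  also have "\<dots> = (\<Sum>k<length r. card ({1..r!k} \<times> {sum_list a+1..sum_list a + s!k}))"
    by (rule card_SigmaI) auto
  also have "\<dots> = (\<Sum>k<length r. r ! k * s ! k)"
    by (simp add: card_cartesian_product)
  finally show ?thesis .
qed

lemma Fr_finite: "finite (Fr a r s)"
  unfolding Fr_def by auto

theorem proposition5p2:
  fixes a r s :: "nat list"
  assumes "\<forall>x \<in> set a. 0 < x"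
    and "length r \<ge> 1"
    and "length s = length r"
  shows "real (card (SB a r s)) =
         real (card (SBm a r s)) * fact (selberg_N a r s) / fact (selberg_Nm a r s)"
proof -
  have N: "selberg_N a r s = selberg_Nm a r s + card (Fr a r s)"
    unfolding selberg_N_def selberg_Nm_def Fr_card by simp
  have SBe: "SB a r s = Sset (book_cells True a r s \<union> Fr a r s) (selberg_Nm a r s + card (Fr a r s)) (Rel True a r s)"
    unfolding SB_def SB_gen_eq book_decomp[symmetric] Rel_eq[symmetric] N by simp
  have SBme: "SBm a r s = Sset (book_cells True a r s) (selberg_Nm a r s) (Rel True a r s)"
    unfolding SBm_def SB_gen_eq by simp
  have "card (SB a r s) * fact (selberg_Nm a r s) = card (SBm a r s) * fact (selberg_N a r s)"
    unfolding SBe SBme N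
    by (rule iter[OF Fr_finite Fr_disj Rel_sub])
  then have "real (card (SB a r s)) * fact (selberg_Nm a r s) = real (card (SBm a r s)) * fact (selberg_N a r s)"
    by (metis of_nat_fact of_nat_mult)
  moreover have "(fact (selberg_Nm a r s) :: real) > 0" by simp
  ultimately show ?thesis by (simp add: field_simps)
qed

end
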